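(* In the brand-effects model, fix $k$ with $0 \le k < s$, fix the ads placed in positions $1,\dots,k$, fix the eCPM bids of the remaining (not yet placed) non-brand advertisers (at least one), and fix the eCPM bids of all remaining brand advertisers except the one with the highest eCPM bid among the remaining brand advertisers, whose eCPM bid $v_b$ is allowed to vary (over values at least as large as the other remaining brand eCPM bids). Then exactly one of the following holds: it is optimal to show a brand ad in position $k+1$ for no value of $v_b$; it is optimal for every value of $v_b$; or there is a threshold $t$ such that it is optimal to show a brand ad in position $k+1$ if and only if $v_b \ge t$.
   Context: Brand-effects model: there are $s$ positions and a set of advertisers, each either a brand advertiser or a non-brand advertiser; advertiser $i$ has quality score $q_i \ge 0$ and bid $b_i \ge 0$, and its eCPM bid is $b_i q_i$. Each position $k$ has two quality scores $\beta_k$ and $\eta_k$, both non-increasing in $k$, normalized so $\beta_1=\eta_1=1$. A brand (resp. non-brand) advertiser with quality $q$ shown in position $k$ is clicked with probability $\beta_k q$ (resp. $\eta_k q$). An allocation places distinct advertisers in the positions; its total expected welfare is $\sum_j b_{(j)} p_{(j)}$, where $b_{(j)}$ and $p_{(j)}$ are the bid and click probability of the ad in position $j$. "It is optimal to show a brand ad in position $k+1$" means that the maximum total expected welfare over allocations that agree with the fixed ads in positions $1,\dots,k$ and have a brand ad in position $k+1$ is at least the maximum over such allocations having a non-brand ad in position $k+1$. *)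

theory Defs
  imports Main "HOL-Library.Extended_Real"
begin

text \<open>Advertisers have type 'a; A is the (finite) set of
advertisers, brand i says whether i is a brand advertiser, and ecpm i = b_i * q_i
is the eCPM bid.
A brand (non-brand) ad with quality q in position j is clicked with probability
beta j * q (eta j * q), so its expected welfare is b * (beta j * q) = ecpm * beta j
(resp. ecpm * eta j).\<close>

definition valid_alloc :: "'a set \<Rightarrow> nat \<Rightarrow> (nat \<Rightarrow> 'a option) \<Rightarrow> bool" where
  "valid_alloc A s x \<longleftrightarrow>
     (\<forall>j. j \<notin> {1..s} \<longrightarrow> x j = None) \<and>
     (\<forall>j i. x j = Some i \<longrightarrow> i \<in> A) \<and>
     (\<forall>j j' i. x j = Some i \<and> x j' = Some i \<longrightarrow> j = j')"

definition click_factor :: "('a \<Rightarrow> bool) \<Rightarrow> (nat \<Rightarrow> real) \<Rightarrow> (nat \<Rightarrow> real) \<Rightarrow> 'a \<Rightarrow> nat \<Rightarrow> real" where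
  "click_factor brand \<beta> \<eta> i j = (if brand i then \<beta> j else \<eta> j)"

definition welfare ::
  "nat \<Rightarrow> ('a \<Rightarrow> bool) \<Rightarrow> ('a \<Rightarrow> real) \<Rightarrow> (nat \<Rightarrow> real) \<Rightarrow> (nat \<Rightarrow> real) \<Rightarrow> (nat \<Rightarrow> 'a option) \<Rightarrow> real" where
  "welfare s brand ecpm \<beta> \<eta> x =
     (\<Sum>j\<in>{1..s}. case x j of None \<Rightarrow> 0 | Some i \<Rightarrow> ecpm i * click_factor brand \<beta> \<eta> i j)"

definition allocs_with ::
  "'a set \<Rightarrow> nat \<Rightarrow> ('a \<Rightarrow> bool) \<Rightarrow> nat \<Rightarrow> (nat \<Rightarrow> 'a option) \<Rightarrow> bool \<Rightarrow> (nat \<Rightarrow> 'a option) set" where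
  "allocs_with A s brand k f bt =
     {x. valid_alloc A s x \<and> (\<forall>j\<in>{1..k}. x j = f j) \<and>
         (\<exists>i. x (Suc k) = Some i \<and> brand i = bt)}"

definition max_welfare ::
  "'a set \<Rightarrow> nat \<Rightarrow> ('a \<Rightarrow> bool) \<Rightarrow> ('a \<Rightarrow> real) \<Rightarrow> (nat \<Rightarrow> real) \<Rightarrow> (nat \<Rightarrow> real)
     \<Rightarrow> nat \<Rightarrow> (nat \<Rightarrow> 'a option) \<Rightarrow> bool \<Rightarrow> real" where
  "max_welfare A s brand ecpm \<beta> \<eta> k f bt =
     Max (welfare s brand ecpm \<beta> \<eta> ` allocs_with A s brand k f bt)"

definition brand_optimal ::
  "'a set \<Rightarrow> nat \<Rightarrow> ('a \<Rightarrow> bool) \<Rightarrow> ('a \<Rightarrow> real) \<Rightarrow> (nat \<Rightarrow> real) \<Rightarrow> (nat \<Rightarrow> real)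
     \<Rightarrow> nat \<Rightarrow> (nat \<Rightarrow> 'a option) \<Rightarrow> bool" where
  "brand_optimal A s brand ecpm \<beta> \<eta> k f \<longleftrightarrow>
     max_welfare A s brand ecpm \<beta> \<eta> k f True \<ge> max_welfare A s brand ecpm \<beta> \<eta> k f False"

definition remaining :: "'a set \<Rightarrow> nat \<Rightarrow> (nat \<Rightarrow> 'a option) \<Rightarrow> 'a set" where
  "remaining A k f = {i \<in> A. \<forall>j\<in>{1..k}. f j \<noteq> Some i}"

end

theory Submission
  imports Defs
begin

lemma finite_valid: "finite A \<Longrightarrow> finite {x. valid_alloc A s x}"
proof -
  assume fA: "finite A"
  have "{x. valid_alloc A s x} \<subseteq> {x. \<forall>j. (j \<in> {1..s} \<longrightarrow> x j \<in> insert None (Some ` A)) \<and> (j \<notin> {1..s} \<longrightarrow> x j = None)}"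
    unfolding valid_alloc_def
    apply clarsimp
    subgoal for x j by (cases "x j") auto
    done
  moreover have "finite {x. \<forall>j. (j \<in> {1..s} \<longrightarrow> x j \<in> insert None (Some ` A)) \<and> (j \<notin> {1..s} \<longrightarrow> x j = None)}"
    by (rule finite_set_of_finite_funs) (use fA in auto)
  ultimately show ?thesis by (rule finite_subset)
qed

lemma finite_allocs: "finite A \<Longrightarrow> finite (allocs_with A s brand k f bt)"
  unfolding allocs_with_def by (rule finite_subset[OF _ finite_valid]) auto

lemma welfare_shift:
  assumes "brand i0"
  shows "welfare s brand (ecpm(i0 := v')) \<beta> \<eta> x = welfare s brand (ecpm(i0 := v)) \<beta> \<eta> x
     + (v' - v) * (\<Sum>j\<in>{1..s}. case x j of None \<Rightarrow> 0 | Some i \<Rightarrow> if i = i0 then \<beta> j else 0)"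
  unfolding welfare_def sum_distrib_left sum.distrib[symmetric]
  by (rule sum.cong) (auto split: option.split simp: click_factor_def assms algebra_simps)

lemma valid_upd1:
  assumes v: "valid_alloc A s x" and p: "p \<in> {1..s}" and i: "i \<in> A" and n: "\<forall>j. x j \<noteq> Some i"
  shows "valid_alloc A s (x(p := Some i))"
proof -
  have o: "\<forall>j. j \<notin> {1..s} \<longrightarrow> x j = None" and a: "\<forall>j i. x j = Some i \<longrightarrow> i \<in> A"
    and inj: "\<forall>j j' i. x j = Some i \<and> x j' = Some i \<longrightarrow> j = j'" using v unfolding valid_alloc_def by blast+
  have 1: "\<forall>j. j \<notin> {1..s} \<longrightarrow> (x(p := Some i)) j = None" using o p by auto
  have 2: "\<forall>j i'. (x(p := Some i)) j = Some i' \<longrightarrow> i' \<in> A" using a i by simp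
  have 3: "\<forall>j j' i'. (x(p := Some i)) j = Some i' \<and> (x(p := Some i)) j' = Some i' \<longrightarrow> j = j'"
  proof (intro allI impI)
    fix j j' i' assume h: "(x(p := Some i)) j = Some i' \<and> (x(p := Some i)) j' = Some i'"
    show "j = j'"
    proof (cases "j = p")
      case True
      then have "i' = i" using h by simp
      then show ?thesis using h n True by (cases "j' = p") auto
    next
      case False
      then have xj: "x j = Some i'" using h by simp
      show ?thesis
      proof (cases "j' = p")
        case True then show ?thesis using h xj n by simp
      next
        case False then show ?thesis using h xj inj by simp
      qed
    qed
  qed
  show ?thesis unfolding valid_alloc_def using 1 2 3 by blast
qed

lemma valid_swap:
  assumes v: "valid_alloc A s x" and p: "p \<in> {1..s}" and q: "q \<in> {1..s}" and pq: "p \<noteq> q"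
    and xp: "x p = Some a" and xq: "x q = Some c"
  shows "valid_alloc A s (x(p := Some c, q := Some a))"
proof -
  have o: "\<forall>j. j \<notin> {1..s} \<longrightarrow> x j = None" and a: "\<forall>j i. x j = Some i \<longrightarrow> i \<in> A"
    and inj: "\<forall>j j' i. x j = Some i \<and> x j' = Some i \<longrightarrow> j = j'" using v unfolding valid_alloc_def by blast+
  define \<sigma> where "\<sigma> = (\<lambda>j::nat. if j = p then q else if j = q then p else j)"
  have eq: "(x(p := Some c, q := Some a)) j = x (\<sigma> j)" for j
    unfolding \<sigma>_def using xp xq pq by simp
  have sinj: "\<sigma> j = \<sigma> j' \<Longrightarrow> j = j'" for j j' unfolding \<sigma>_def by (auto split: if_splits)
  have sout: "j \<notin> {1..s} \<Longrightarrow> \<sigma> j = j" for j unfolding \<sigma>_def using p q by auto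
  show ?thesis unfolding valid_alloc_def eq
  proof (intro conjI allI impI)
    fix j assume "j \<notin> {1..s}" then show "x (\<sigma> j) = None" using sout o by simp
  next
    fix j i assume "x (\<sigma> j) = Some i" then show "i \<in> A" using a by blast
  next
    fix j j' i assume "x (\<sigma> j) = Some i \<and> x (\<sigma> j') = Some i"
    then have "\<sigma> j = \<sigma> j'" using inj by blast
    then show "j = j'" by (rule sinj)
  qed
qed

lemma sum_single:
  assumes "finite S" "p \<in> S" "\<forall>j\<in>S-{p}. F j = 0"
  shows "sum F S = F p"
proof -
  have "sum F S = F p + sum F (S - {p})" using assms by (simp add: sum.remove)
  moreover have "sum F (S - {p}) = 0" using assms(3) by (intro sum.neutral) blast
  ultimately show ?thesis by simp
qed

lemma sum_diff1:
  fixes F G :: "nat \<Rightarrow> real"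
  assumes "finite S" "p \<in> S" "\<forall>j\<in>S-{p}. F j = G j"
  shows "sum G S - sum F S = G p - F p"
proof -
  have "sum G S = G p + sum G (S - {p})" using assms by (simp add: sum.remove)
  moreover have "sum F S = F p + sum F (S - {p})" using assms by (simp add: sum.remove)
  moreover have "sum G (S - {p}) = sum F (S - {p})" using assms(3) by (intro sum.cong) auto
  ultimately show ?thesis by simp
qed

lemma sum_diff2:
  fixes F G :: "nat \<Rightarrow> real"
  assumes "finite S" "p \<in> S" "q \<in> S" "p \<noteq> q" "\<forall>j\<in>S-{p,q}. F j = G j"
  shows "sum G S - sum F S = G p + G q - F p - F q"
proof -
  have "sum G S = G p + (G q + sum G (S - {p} - {q}))"
    using assms by (simp add: sum.remove[of S p] sum.remove[of "S-{p}" q])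
  moreover have "sum F S = F p + (F q + sum F (S - {p} - {q}))"
    using assms by (simp add: sum.remove[of S p] sum.remove[of "S-{p}" q])
  moreover have "sum G (S - {p} - {q}) = sum F (S - {p} - {q})"
    using assms by (intro sum.cong) auto
  ultimately show ?thesis by simp
qed

theorem theorem5:
  fixes A :: "'a set" and brand :: "'a \<Rightarrow> bool" and ecpm :: "'a \<Rightarrow> real"
    and s k :: nat and \<beta> \<eta> :: "nat \<Rightarrow> real"
    and f :: "nat \<Rightarrow> 'a option" and i0 :: 'a
  assumes finA: "finite A"
    and ecpm_nonneg: "\<forall>i\<in>A. ecpm i \<ge> 0"
    and beta_one: "\<beta> 1 = 1" and eta_one: "\<eta> 1 = 1"
    and beta_mono: "\<forall>i j. 1 \<le> i \<and> i \<le> j \<and> j \<le> s \<longrightarrow> \<beta> j \<le> \<beta> i"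
    and eta_mono: "\<forall>i j. 1 \<le> i \<and> i \<le> j \<and> j \<le> s \<longrightarrow> \<eta> j \<le> \<eta> i"
    and beta_nonneg: "\<forall>j\<in>{1..s}. \<beta> j \<ge> 0"
    and eta_nonneg: "\<forall>j\<in>{1..s}. \<eta> j \<ge> 0"
    and k_lt: "k < s"
    and f_valid: "valid_alloc A k f"
    and f_filled: "\<forall>j\<in>{1..k}. f j \<noteq> None"
    and nonbrand_rem: "\<exists>i\<in>remaining A k f. \<not> brand i"
    and i0_rem: "i0 \<in> remaining A k f" and i0_brand: "brand i0"
  defines "m \<equiv> Max (insert 0 (ecpm ` {i\<in>remaining A k f. brand i \<and> i \<noteq> i0}))"
    and "P \<equiv> (\<lambda>v::real. brand_optimal A s brand (ecpm(i0 := v)) \<beta> \<eta> k f)"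
  shows "((\<forall>v\<ge>m. \<not> P v) \<and> \<not> (\<forall>v\<ge>m. P v) \<and> \<not> (\<exists>t>m. \<forall>v\<ge>m. P v \<longleftrightarrow> t \<le> v))
       \<or> (\<not> (\<forall>v\<ge>m. \<not> P v) \<and> (\<forall>v\<ge>m. P v) \<and> \<not> (\<exists>t>m. \<forall>v\<ge>m. P v \<longleftrightarrow> t \<le> v))
       \<or> (\<not> (\<forall>v\<ge>m. \<not> P v) \<and> \<not> (\<forall>v\<ge>m. P v) \<and> (\<exists>t>m. \<forall>v\<ge>m. P v \<longleftrightarrow> t \<le> v))"
proof -
  define e where "e = (\<lambda>v. ecpm(i0 := v))"
  define W where "W = (\<lambda>v x. welfare s brand (e v) \<beta> \<eta> x)"
  define AS where "AS = (\<lambda>b. allocs_with A s brand k f b)"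
  define MW where "MW = (\<lambda>v b. Max (W v ` AS b))"
  define G where "G = (\<lambda>x::nat \<Rightarrow> 'a option. \<Sum>j\<in>{1..s}. case x j of None \<Rightarrow> 0 | Some i \<Rightarrow> if i = i0 then \<beta> j else 0)"
  define c where "c = \<beta> (Suc k)"
  have sk: "Suc k \<in> {1..s}" using k_lt by auto
  have c0: "0 \<le> c" using beta_nonneg sk c_def by auto
  have finAS: "finite (AS b)" for b unfolding AS_def using finA by (rule finite_allocs)
  have i0A: "i0 \<in> A" and i0f: "\<forall>j\<in>{1..k}. f j \<noteq> Some i0" using i0_rem unfolding remaining_def by auto
  have fnone: "\<forall>j. j \<notin> {1..k} \<longrightarrow> f j = None" and fA: "\<forall>j i. f j = Some i \<longrightarrow> i \<in> A"
    and finj: "\<forall>j j' i. f j = Some i \<and> f j' = Some i \<longrightarrow> j = j'"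
    using f_valid unfolding valid_alloc_def by auto
  have ext: "f(Suc k := Some n) \<in> AS (brand n)" if "n \<in> remaining A k f" for n
  proof -
    have nA: "n \<in> A" and nf: "\<forall>j\<in>{1..k}. f j \<noteq> Some n" using that unfolding remaining_def by auto
    have nf2: "f j \<noteq> Some n" for j using nf fnone by (cases "j \<in> {1..k}") auto
    have "valid_alloc A s (f(Suc k := Some n))"
      unfolding valid_alloc_def using fnone fA finj nA nf2 k_lt by auto
    then show ?thesis unfolding AS_def allocs_with_def by auto
  qed
  have ne: "AS b \<noteq> {}" for b
  proof (cases b)
    case True then show ?thesis using ext[OF i0_rem] i0_brand by auto
  next
    case False
    from nonbrand_rem obtain n where "n \<in> remaining A k f" "\<not> brand n" by auto
    then show ?thesis using ext[of n] False by auto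
  qed
  have Gb: "0 \<le> G x \<and> G x \<le> c" if "x \<in> AS b" for x b
  proof -
    have xv: "valid_alloc A s x" and xf: "\<forall>j\<in>{1..k}. x j = f j" using that unfolding AS_def allocs_with_def by auto
    have xnone: "\<forall>j. j \<notin> {1..s} \<longrightarrow> x j = None" and xinj: "\<forall>j j' i. x j = Some i \<and> x j' = Some i \<longrightarrow> j = j'"
      using xv unfolding valid_alloc_def by auto
    show ?thesis
    proof (cases "\<exists>j\<in>{1..s}. x j = Some i0")
      case True
      then obtain j where j: "j \<in> {1..s}" "x j = Some i0" by auto
      have "j \<notin> {1..k}" using j xf i0f by force
      then have jk: "Suc k \<le> j" using j by auto
      have "G x = \<beta> j" unfolding G_def
        by (subst sum_single[of _ j]) (use j xinj in \<open>auto split: option.split\<close>)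
      moreover have "\<beta> j \<le> c" using beta_mono jk j c_def by auto
      moreover have "0 \<le> \<beta> j" using beta_nonneg j by auto
      ultimately show ?thesis by simp
    next
      case False
      then have "G x = 0" unfolding G_def by (intro sum.neutral) (auto split: option.split)
      then show ?thesis using c0 by simp
    qed
  qed
  have Gi0: "G x = c" if "valid_alloc A s x" "x (Suc k) = Some i0" for x
  proof -
    have xinj: "\<forall>j j' i. x j = Some i \<and> x j' = Some i \<longrightarrow> j = j'"
      using that(1) unfolding valid_alloc_def by auto
    show ?thesis unfolding G_def c_def
      by (subst sum_single[of _ "Suc k"]) (use sk that(2) xinj in \<open>auto split: option.split\<close>)
  qed
  have shift: "W v' x = W v x + (v' - v) * G x" for v v' x
    unfolding W_def e_def G_def by (rule welfare_shift[of brand i0, OF i0_brand])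
  have MWmono: "MW v b \<le> MW v' b \<and> MW v' b \<le> MW v b + (v' - v) * c" if "v \<le> v'" for v v' b
  proof
    obtain y where y: "y \<in> AS b" "MW v b = W v y" unfolding MW_def
      using Max_in[of "W v ` AS b"] finAS ne by fastforce
    have "W v y \<le> W v' y" using shift[of v' y v] Gb[OF y(1)] that by simp
    also have "W v' y \<le> MW v' b" unfolding MW_def using finAS y(1) by simp
    finally show "MW v b \<le> MW v' b" using y by simp
  next
    obtain y where y: "y \<in> AS b" "MW v' b = W v' y" unfolding MW_def
      using Max_in[of "W v' ` AS b"] finAS ne by fastforce
    have "(v' - v) * G y \<le> (v' - v) * c" using Gb[OF y(1)] that by (intro mult_left_mono) auto
    then have "W v' y \<le> W v y + (v' - v) * c" using shift[of v' y v] by simp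
    also have "W v y \<le> MW v b" unfolding MW_def using finAS y(1) by simp
    finally show "MW v' b \<le> MW v b + (v' - v) * c" using y by simp
  qed
  have finR: "finite {i\<in>remaining A k f. brand i \<and> i \<noteq> i0}"
    using finA by (rule finite_subset[rotated]) (auto simp: remaining_def)
  have m0: "0 \<le> m" unfolding m_def using finR by simp
  have swap: "\<exists>x'\<in>AS True. x' (Suc k) = Some i0 \<and> W v x \<le> W v x'" if hv: "m \<le> v" and hx: "x \<in> AS True" for v x
  proof -
    have xv: "valid_alloc A s x" and xf: "\<forall>j\<in>{1..k}. x j = f j" using hx unfolding AS_def allocs_with_def by auto
    have xnone: "\<forall>j. j \<notin> {1..s} \<longrightarrow> x j = None" and xA: "\<forall>j i. x j = Some i \<longrightarrow> i \<in> A"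
      and xinj: "\<forall>j j' i. x j = Some i \<and> x j' = Some i \<longrightarrow> j = j'"
      using xv unfolding valid_alloc_def by auto
    obtain b where b: "x (Suc k) = Some b" "brand b" using hx unfolding AS_def allocs_with_def by auto
    show ?thesis
    proof (cases "b = i0")
      case True then show ?thesis using hx b by auto
    next
      case bi0: False
      have bA: "b \<in> A" using xA b by auto
      have "\<forall>j\<in>{1..k}. f j \<noteq> Some b"
      proof
        fix j assume "j \<in> {1..k}"
        show "f j \<noteq> Some b"
        proof
          assume "f j = Some b"
          then have "x j = Some b" using xf \<open>j \<in> {1..k}\<close> by auto
          then have "j = Suc k" using xinj b by blast
          then show False using \<open>j \<in> {1..k}\<close> by auto
        qed
      qed
      then have "b \<in> {i\<in>remaining A k f. brand i \<and> i \<noteq> i0}" using bA b bi0 unfolding remaining_def by auto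
      then have bm: "ecpm b \<le> m" unfolding m_def using finR by (intro Max_ge) auto
      have ev: "e v i0 = v" "e v b = ecpm b" unfolding e_def using bi0 by auto
      define T where "T = (\<lambda>y j. case y j of None \<Rightarrow> 0 | Some i \<Rightarrow> e v i * click_factor brand \<beta> \<eta> i j)"
      have WT: "W v y = sum (T y) {1..s}" for y unfolding W_def T_def welfare_def by simp
      show ?thesis
      proof (cases "\<exists>j. x j = Some i0")
        case True
        then obtain j where j: "x j = Some i0" by auto
        have js: "j \<in> {1..s}" using j xnone by force
        have jk: "j \<notin> {1..k}" using j xf i0f by force
        have jne: "j \<noteq> Suc k" using j b bi0 by auto
        have jge: "Suc k \<le> j" using js jk by auto
        define x' where "x' = x(Suc k := Some i0, j := Some b)"
        have "valid_alloc A s x'"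
          unfolding x'_def by (rule valid_swap[OF xv sk js not_sym[OF jne] b(1) j])
        moreover have "\<forall>j'\<in>{1..k}. x' j' = f j'" using xf jk unfolding x'_def by auto
        moreover have x'k: "x' (Suc k) = Some i0" unfolding x'_def using jne by simp
        ultimately have x'AS: "x' \<in> AS True" unfolding AS_def allocs_with_def using i0_brand by auto
        have "sum (T x') {1..s} - sum (T x) {1..s} = T x' (Suc k) + T x' j - T x (Suc k) - T x j"
          by (rule sum_diff2) (use sk js jne in \<open>auto simp: T_def x'_def\<close>)
        also have "\<dots> = (v - ecpm b) * (\<beta> (Suc k) - \<beta> j)"
          unfolding T_def x'_def using jne b j ev i0_brand by (simp add: click_factor_def algebra_simps)
        also have "\<dots> \<ge> 0" using beta_mono jge js bm hv by (intro mult_nonneg_nonneg) auto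
        finally have "W v x \<le> W v x'" unfolding WT by simp
        then show ?thesis using x'AS x'k by auto
      next
        case False
        define x' where "x' = x(Suc k := Some i0)"
        have "valid_alloc A s x'"
          unfolding x'_def using valid_upd1[OF xv sk i0A] False by auto
        moreover have "\<forall>j'\<in>{1..k}. x' j' = f j'" using xf unfolding x'_def by auto
        moreover have x'k: "x' (Suc k) = Some i0" unfolding x'_def by simp
        ultimately have x'AS: "x' \<in> AS True" unfolding AS_def allocs_with_def using i0_brand by auto
        have "sum (T x') {1..s} - sum (T x) {1..s} = T x' (Suc k) - T x (Suc k)"
          by (rule sum_diff1) (use sk in \<open>auto simp: T_def x'_def\<close>)
        also have "\<dots> = (v - ecpm b) * \<beta> (Suc k)"
          unfolding T_def x'_def using b ev i0_brand by (simp add: click_factor_def algebra_simps)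
        also have "\<dots> \<ge> 0" using bm hv beta_nonneg sk by (intro mult_nonneg_nonneg) auto
        finally have "W v x \<le> W v x'" unfolding WT by simp
        then show ?thesis using x'AS x'k by auto
      qed
    qed
  qed
  have MWB: "MW v True + (v' - v) * c \<le> MW v' True" if hmv: "m \<le> v" and hvv: "v \<le> v'" for v v'
  proof -
    obtain y where y: "y \<in> AS True" "MW v True = W v y" unfolding MW_def
      using Max_in[of "W v ` AS True"] finAS ne by fastforce
    obtain x' where x': "x' \<in> AS True" "x' (Suc k) = Some i0" "W v y \<le> W v x'"
      using swap[OF hmv y(1)] by auto
    have "G x' = c" using x' Gi0 unfolding AS_def allocs_with_def by auto
    then have "W v' x' = W v x' + (v' - v) * c" using shift[of v' x' v] by simp
    moreover have "W v' x' \<le> MW v' True" unfolding MW_def using finAS x'(1) by simp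
    ultimately show ?thesis using y x'(3) by simp
  qed
  define D where "D = (\<lambda>v. MW v True - MW v False)"
  have PD: "P v \<longleftrightarrow> 0 \<le> D v" for v
    unfolding P_def D_def MW_def W_def AS_def e_def brand_optimal_def max_welfare_def by simp
  have Dmono: "D v \<le> D v' \<and> D v' \<le> D v + (v' - v) * c" if "m \<le> v" "v \<le> v'" for v v'
    using MWB[OF that(1) that(2)] MWmono[OF that(2), of True] MWmono[OF that(2), of False] unfolding D_def by auto
  show ?thesis
  proof (cases "0 \<le> D m")
    case True
    have all: "\<forall>v\<ge>m. P v"
    proof (intro allI impI)
      fix v assume "m \<le> v"
      then have "D m \<le> D v" using Dmono[of m v] by simp
      then show "P v" using True PD by simp
    qed
    have "\<not> (\<exists>t>m. \<forall>v\<ge>m. P v \<longleftrightarrow> t \<le> v)"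
    proof
      assume "\<exists>t>m. \<forall>v\<ge>m. P v \<longleftrightarrow> t \<le> v"
      then obtain t where "t > m" "\<forall>v\<ge>m. P v \<longleftrightarrow> t \<le> v" by auto
      then show False using all by auto
    qed
    then show ?thesis using all by auto
  next
    case Dm: False
    show ?thesis
    proof (cases "\<forall>v\<ge>m. D v < 0")
      case True
      then have none: "\<forall>v\<ge>m. \<not> P v" using PD by auto
      have "\<not> (\<exists>t>m. \<forall>v\<ge>m. P v \<longleftrightarrow> t \<le> v)"
      proof
        assume "\<exists>t>m. \<forall>v\<ge>m. P v \<longleftrightarrow> t \<le> v"
        then obtain t where "t > m" "\<forall>v\<ge>m. P v \<longleftrightarrow> t \<le> v" by auto
        then show False using none by (meson less_imp_le order_refl)
      qed
      then show ?thesis using none by auto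
    next
      case False
      then obtain v1 where v1: "m \<le> v1" "0 \<le> D v1" by auto
      define S where "S = {v. m \<le> v \<and> 0 \<le> D v}"
      define t where "t = Inf S"
      have Sne: "S \<noteq> {}" using v1 S_def by auto
      have bdd: "bdd_below S" unfolding S_def by (rule bdd_belowI[of _ m]) auto
      have tm: "m \<le> t" unfolding t_def using Sne by (intro cInf_greatest) (auto simp: S_def)
      have tle: "t \<le> v" if "v \<in> S" for v unfolding t_def using bdd that by (simp add: cInf_lower)
      have Dt: "0 \<le> D t"
      proof (rule ccontr)
        assume "\<not> 0 \<le> D t"
        then have neg: "D t < 0" by simp
        define \<delta> where "\<delta> = - D t / (c + 1)"
        have dpos: "0 < \<delta>" unfolding \<delta>_def using neg c0 by (simp add: divide_neg_pos)
        have "Inf S < t + \<delta>" using dpos t_def by simp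
        then obtain v where v: "v \<in> S" "v < t + \<delta>" using cInf_less_iff[OF Sne bdd] by auto
        have "D v \<le> D t + (v - t) * c" using Dmono[OF tm tle[OF v(1)]] by simp
        also have "(v - t) * c \<le> \<delta> * c" using v(2) c0 by (intro mult_right_mono) auto
        also have "\<delta> * c < - D t"
        proof -
          have "\<delta> * c = - D t * (c / (c + 1))" unfolding \<delta>_def by simp
          also have "\<dots> < - D t * 1" using neg c0 by (intro mult_strict_left_mono) auto
          finally show ?thesis by simp
        qed
        finally have "D v < 0" by simp
        then show False using v(1) unfolding S_def by auto
      qed
      have tgt: "t > m" using Dt Dm tm by (cases "t = m") auto
      have thr: "\<forall>v\<ge>m. P v \<longleftrightarrow> t \<le> v"
      proof (intro allI impI)
        fix v assume "m \<le> v"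
        show "P v \<longleftrightarrow> t \<le> v"
        proof
          assume "P v" then have "v \<in> S" using \<open>m \<le> v\<close> PD S_def by auto
          then show "t \<le> v" by (rule tle)
        next
          assume "t \<le> v" then show "P v" using Dmono[OF tm, of v] Dt PD by auto
        qed
      qed
      have "\<not> (\<forall>v\<ge>m. \<not> P v)" using thr tgt by (meson less_imp_le order_refl)
      moreover have "\<not> (\<forall>v\<ge>m. P v)" using Dm PD by auto
      ultimately show ?thesis using thr tgt by blast
    qed
  qed
qed

end
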